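(* Let $\epsilon,A\in\mathbb{R}$ with $\epsilon\neq0$, $A\neq 0$, and let $f:\mathbb{R}^4\to\mathbb{R}^4$ be $$f(x,y,z,w)=\Big(y,\,z,\,w,\,-x-\tfrac{1}{A}y+\tfrac{2}{A}z-\tfrac{1}{\epsilon A}z^3-\tfrac{1}{A}w\Big).$$ Then the non-wandering set of $f$ is contained in the cube $[-R,R]^4$, where $R=\sqrt{|\epsilon A|\big(2+\tfrac{4}{|A|}\big)}$.
   Context: The non-wandering set of $f$ is the set of points $q$ such that for every neighbourhood $U$ of $q$ there is $k\geq1$ with $f^k(U)\cap U\neq\emptyset$. *)

theory Defs
  imports "HOL-Analysis.Analysis"
begin

definition nonwandering_set :: "('a::topological_space \<Rightarrow> 'a) \<Rightarrow> 'a set" where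
  "nonwandering_set f = {q. \<forall>U. open U \<and> q \<in> U \<longrightarrow>
      (\<exists>k\<ge>1. (f ^^ k) ` U \<inter> U \<noteq> {})}"

definition f4 :: "real \<Rightarrow> real \<Rightarrow> real \<times> real \<times> real \<times> real \<Rightarrow> real \<times> real \<times> real \<times> real" where
  "f4 \<epsilon> A = (\<lambda>(x, y, z, w). (y, z, w,
      - x - (1/A) * y + (2/A) * z - (1/(\<epsilon> * A)) * z ^ 3 - (1/A) * w))"

end

theory Submission
  imports Defs
begin

fun useq :: "real \<Rightarrow> real \<Rightarrow> real \<times> real \<times> real \<times> real \<Rightarrow> nat \<Rightarrow> real" where
  "useq e A p 0 = fst p"
| "useq e A p (Suc 0) = fst (snd p)"
| "useq e A p (Suc (Suc 0)) = fst (snd (snd p))"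
| "useq e A p (Suc (Suc (Suc 0))) = snd (snd (snd p))"
| "useq e A p (Suc (Suc (Suc (Suc n)))) =
     - useq e A p n - (1/A) * useq e A p (Suc n) + (2/A) * useq e A p (Suc (Suc n))
     - (1/(e*A)) * useq e A p (Suc (Suc n)) ^ 3 - (1/A) * useq e A p (Suc (Suc (Suc n)))"

lemma orbit:
  "(f4 e A ^^ n) p = (useq e A p n, useq e A p (Suc n), useq e A p (Suc (Suc n)),
                      useq e A p (Suc (Suc (Suc n))))"
proof (induction n)
  case 0
  then show ?case by (cases p) auto
next
  case (Suc n)
  then show ?case by (simp add: f4_def)
qed

lemma recur:
  assumes "e \<noteq> 0" "A \<noteq> 0"
  shows "A * (useq e A p n + useq e A p (n+4)) + useq e A p (n+1) + useq e A p (n+3)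
         = 2 * useq e A p (n+2) - useq e A p (n+2) ^ 3 / e"
proof -
  have "useq e A p (n+4) = - useq e A p n - (1/A) * useq e A p (n+1) + (2/A) * useq e A p (n+2)
     - (1/(e*A)) * useq e A p (n+2) ^ 3 - (1/A) * useq e A p (n+3)"
    (is "_ = ?r") by (simp add: numeral_eq_Suc)
  hence "A * useq e A p (n+4) = A * ?r" by simp
  also have "\<dots> = - A * useq e A p n - useq e A p (n+1) + 2 * useq e A p (n+2)
     - useq e A p (n+2) ^ 3 / e - useq e A p (n+3)"
    using assms by (simp add: field_simps)
  finally show ?thesis by (simp add: algebra_simps)
qed

lemma key:
  fixes a b c d e' A e L M K g :: real
  assumes "e \<noteq> 0" "A * (a + e') + b + d = 2 * c - c ^ 3 / e"
    and "\<bar>a\<bar> \<le> M" "\<bar>b\<bar> \<le> M" "\<bar>d\<bar> \<le> M" "\<bar>e'\<bar> \<le> M"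
    and "\<bar>c\<bar> \<ge> L" "L > 0" "L^2 / \<bar>e\<bar> - 2 \<ge> K + g" "K + g > 0"
    and "K = 2 * \<bar>A\<bar> + 2"
  shows "K * M \<ge> L * (K + g)"
proof -
  have "\<bar>A * (a + e') + b + d\<bar> \<le> \<bar>A\<bar> * (\<bar>a\<bar> + \<bar>e'\<bar>) + \<bar>b\<bar> + \<bar>d\<bar>"
  proof -
    have "\<bar>a + e'\<bar> \<le> \<bar>a\<bar> + \<bar>e'\<bar>" by (rule abs_triangle_ineq)
    hence "\<bar>A\<bar> * \<bar>a + e'\<bar> \<le> \<bar>A\<bar> * (\<bar>a\<bar> + \<bar>e'\<bar>)" by (intro mult_left_mono) auto
    moreover have "\<bar>A * (a + e') + b + d\<bar> \<le> \<bar>A\<bar> * \<bar>a + e'\<bar> + \<bar>b\<bar> + \<bar>d\<bar>"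
    proof -
      have "\<bar>A * (a + e') + b + d\<bar> \<le> \<bar>A * (a + e') + b\<bar> + \<bar>d\<bar>" by (rule abs_triangle_ineq)
      moreover have "\<bar>A * (a + e') + b\<bar> \<le> \<bar>A * (a + e')\<bar> + \<bar>b\<bar>" by (rule abs_triangle_ineq)
      moreover have "\<bar>A * (a + e')\<bar> = \<bar>A\<bar> * \<bar>a + e'\<bar>" by (rule abs_mult)
      ultimately show ?thesis by linarith
    qed
    ultimately show ?thesis by linarith
  qed
  also have "\<dots> \<le> \<bar>A\<bar> * (M + M) + M + M"
  proof -
    have "\<bar>A\<bar> * (\<bar>a\<bar> + \<bar>e'\<bar>) \<le> \<bar>A\<bar> * (M + M)" using assms by (intro mult_left_mono) auto
    thus ?thesis using assms by linarith
  qed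
  finally have up0: "\<bar>A * (a + e') + b + d\<bar> \<le> \<bar>A\<bar> * (M + M) + M + M" .
  have e1: "\<bar>2 * c - c ^ 3 / e\<bar> = \<bar>A * (a + e') + b + d\<bar>" using assms(2) by simp
  have e2: "K * M = \<bar>A\<bar> * (M + M) + M + M" using assms(11) by (simp add: algebra_simps)
  have up: "\<bar>2 * c - c ^ 3 / e\<bar> \<le> K * M" using up0 e1 e2 by linarith
  have "2 * c - c ^ 3 / e = c * (2 - c^2 / e)" by (simp add: algebra_simps power2_eq_square power3_eq_cube)
  hence eq: "\<bar>2 * c - c ^ 3 / e\<bar> = \<bar>c\<bar> * \<bar>2 - c^2 / e\<bar>" by (simp add: abs_mult)
  have "\<bar>c^2 / e\<bar> = c^2 / \<bar>e\<bar>" by simp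
  hence "\<bar>2 - c^2 / e\<bar> \<ge> c^2 / \<bar>e\<bar> - 2" by linarith
  moreover have "L^2 \<le> \<bar>c\<bar>^2" using assms by (intro power_mono) auto
  hence "c^2 \<ge> L^2" by simp
  hence "c^2 / \<bar>e\<bar> \<ge> L^2 / \<bar>e\<bar>" by (simp add: divide_right_mono)
  ultimately have h2: "\<bar>2 - c^2 / e\<bar> \<ge> K + g" using assms by linarith
  have "L * (K + g) \<le> \<bar>c\<bar> * \<bar>2 - c^2 / e\<bar>"
    using h2 assms by (intro mult_mono) auto
  then show ?thesis using up eq by linarith
qed

lemma abs_close: "\<bar>a - b\<bar> < (d::real) \<Longrightarrow> \<bar>b\<bar> - d \<le> \<bar>a\<bar>"
  by (simp add: abs_less_iff abs_if split: if_splits)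

lemma abs_chain2: "\<bar>a - q\<bar> < (d::real) \<Longrightarrow> \<bar>b - q\<bar> < d \<Longrightarrow> \<bar>b - a\<bar> < 4*d"
  by (simp add: abs_less_iff)

lemma abs_chain4: "\<bar>a - q\<bar> < (d::real) \<Longrightarrow> \<bar>b - q\<bar> < d \<Longrightarrow> \<bar>b - r\<bar> < d
   \<Longrightarrow> \<bar>c - r\<bar> < d \<Longrightarrow> \<bar>c - a\<bar> < 4*d"
  by (simp add: abs_less_iff)

theorem proposition2:
  fixes \<epsilon> A :: real
  assumes "\<epsilon> \<noteq> 0" and "A \<noteq> 0"
  defines "R \<equiv> sqrt (\<bar>\<epsilon> * A\<bar> * (2 + 4 / \<bar>A\<bar>))"
  shows "nonwandering_set (f4 \<epsilon> A) \<subseteq>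
           {-R..R} \<times> {-R..R} \<times> {-R..R} \<times> {-R..R}"
proof
  fix q assume qn: "q \<in> nonwandering_set (f4 \<epsilon> A)"
  obtain q0 q1 q2 q3 where qd: "q = (q0, q1, q2, q3)" by (cases q) auto
  show "q \<in> {-R..R} \<times> {-R..R} \<times> {-R..R} \<times> {-R..R}"
  proof (rule ccontr)
    assume nq: "q \<notin> {-R..R} \<times> {-R..R} \<times> {-R..R} \<times> {-R..R}"
    define M where "M = max (max \<bar>q0\<bar> \<bar>q1\<bar>) (max \<bar>q2\<bar> \<bar>q3\<bar>)"
    have R0: "R \<ge> 0" unfolding R_def by simp
    have MR: "M > R" using nq unfolding qd M_def by auto
    have R2: "R^2 = 2 * \<bar>\<epsilon>\<bar> * \<bar>A\<bar> + 4 * \<bar>\<epsilon>\<bar>"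
      unfolding R_def using assms by (simp add: abs_mult field_simps)
    have "M^2 > R^2" using MR R0 by (simp add: power_strict_mono)
    hence "M^2 / \<bar>\<epsilon>\<bar> > R^2 / \<bar>\<epsilon>\<bar>" using assms by (simp add: divide_strict_right_mono)
    moreover have "R^2 / \<bar>\<epsilon>\<bar> = 2 * \<bar>A\<bar> + 4" using R2 assms by (simp add: field_simps)
    ultimately have Mbig: "M^2 / \<bar>\<epsilon>\<bar> - 2 > 2 * \<bar>A\<bar> + 2" by linarith
    define K where "K = 2 * \<bar>A\<bar> + 2"
    define g where "g = (M^2 / \<bar>\<epsilon>\<bar> - 2 - K) / 2"
    have "K < M^2 / \<bar>\<epsilon>\<bar> - 2" using Mbig K_def by simp
    hence g0: "g > 0" unfolding g_def by (simp only: divide_pos_pos diff_gt_0_iff_gt zero_less_numeral)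
    have K0: "K > 0" unfolding K_def by simp
    have M0: "M > 0" using MR R0 by linarith
    have ev1: "eventually (\<lambda>\<delta>. (M - 5*\<delta>)^2 / \<bar>\<epsilon>\<bar> - 2 > K + g) (at_right (0::real))"
    proof -
      have "((\<lambda>\<delta>. (M - 5*\<delta>)^2 / \<bar>\<epsilon>\<bar> - 2) \<longlongrightarrow> (M - 5*0)^2 / \<bar>\<epsilon>\<bar> - 2) (at_right (0::real))"
        by (intro tendsto_intros) (auto intro!: tendsto_intros simp: assms)
      hence lim: "((\<lambda>\<delta>. (M - 5*\<delta>)^2 / \<bar>\<epsilon>\<bar> - 2) \<longlongrightarrow> M^2 / \<bar>\<epsilon>\<bar> - 2) (at_right (0::real))"
        by simp
      have aux: "K + (X - K)/2 < X" if "0 < (X - K)/2" for X K :: real using that by (simp add: field_simps)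
      have "K + g < M^2 / \<bar>\<epsilon>\<bar> - 2" using aux[OF g0[unfolded g_def]] unfolding g_def .
      with lim show ?thesis by (rule order_tendstoD(1))
    qed
    have ev2: "eventually (\<lambda>\<delta>. 4*\<delta>*(K+g) < (M-\<delta>)*g) (at_right (0::real))"
    proof -
      have "((\<lambda>\<delta>. (M-\<delta>)*g - 4*\<delta>*(K+g)) \<longlongrightarrow> (M-0)*g - 4*0*(K+g)) (at_right (0::real))"
        by (intro tendsto_intros)
      moreover have "0 < (M-0)*g - 4*0*(K+g)" using g0 M0 by simp
      ultimately have "eventually (\<lambda>\<delta>. 0 < (M-\<delta>)*g - 4*\<delta>*(K+g)) (at_right (0::real))"
        by (rule order_tendstoD(1))
      thus ?thesis by eventually_elim simp
    qed
    have ev3: "eventually (\<lambda>\<delta>. M - 5*\<delta> > 0 \<and> \<delta> > 0) (at_right (0::real))"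
    proof -
      have "((\<lambda>\<delta>. M - 5*\<delta>) \<longlongrightarrow> M - 5*0) (at_right (0::real))"
        by (intro tendsto_intros)
      hence "eventually (\<lambda>\<delta>. M - 5*\<delta> > 0) (at_right (0::real))"
        using M0 by (intro order_tendstoD(1)) auto
      moreover have "eventually (\<lambda>\<delta>. \<delta> > (0::real)) (at_right 0)"
        by (simp add: eventually_at_right_less)
      ultimately show ?thesis by eventually_elim auto
    qed
    have "eventually (\<lambda>\<delta>. ((M - 5*\<delta>)^2 / \<bar>\<epsilon>\<bar> - 2 > K + g \<and> 4*\<delta>*(K+g) < (M-\<delta>)*g)
          \<and> M - 5*\<delta> > 0 \<and> \<delta> > 0) (at_right (0::real))"
      using ev1 ev2 ev3 by eventually_elim auto
    from eventually_happens'[OF trivial_limit_at_right_real this]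
    obtain \<delta> where d1: "(M - 5*\<delta>)^2 / \<bar>\<epsilon>\<bar> - 2 > K + g"
      and d2: "4*\<delta>*(K+g) < (M-\<delta>)*g" and d3: "M - 5*\<delta> > 0" and d4: "\<delta> > 0"
      by blast
    from qn have "\<exists>k\<ge>1. (f4 \<epsilon> A ^^ k) ` ball q \<delta> \<inter> ball q \<delta> \<noteq> {}"
      unfolding nonwandering_set_def using d4 by auto
    then obtain k p where k1: "k \<ge> 1" and pU: "p \<in> ball q \<delta>"
      and fpU: "(f4 \<epsilon> A ^^ k) p \<in> ball q \<delta>" by blast
    define u where "u = useq \<epsilon> A p"
    have comp: "\<bar>fst r - q0\<bar> < \<delta> \<and> \<bar>fst (snd r) - q1\<bar> < \<delta> \<and> \<bar>fst (snd (snd r)) - q2\<bar> < \<delta>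
       \<and> \<bar>snd (snd (snd r)) - q3\<bar> < \<delta>" if "r \<in> ball q \<delta>" for r
    proof -
      have dr: "dist r q < \<delta>" using that by (simp add: dist_commute)
      have e1: "dist (fst r) (fst q) \<le> dist r q" by (rule dist_fst_le)
      have e2: "dist (snd r) (snd q) \<le> dist r q" by (rule dist_snd_le)
      have e3: "dist (fst (snd r)) (fst (snd q)) \<le> dist (snd r) (snd q)" by (rule dist_fst_le)
      have e4: "dist (snd (snd r)) (snd (snd q)) \<le> dist (snd r) (snd q)" by (rule dist_snd_le)
      have e5: "dist (fst (snd (snd r))) (fst (snd (snd q))) \<le> dist (snd (snd r)) (snd (snd q))" by (rule dist_fst_le)
      have e6: "dist (snd (snd (snd r))) (snd (snd (snd q))) \<le> dist (snd (snd r)) (snd (snd q))" by (rule dist_snd_le)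
      show ?thesis using dr e1 e2 e3 e4 e5 e6 unfolding qd by (simp add: dist_real_def)
    qed
    have p0: "(f4 \<epsilon> A ^^ 0) p = (u 0, u 1, u 2, u 3)" unfolding u_def by (subst orbit) (simp add: numeral_eq_Suc)
    hence pe: "p = (u 0, u 1, u 2, u 3)" by simp
    have pk: "(f4 \<epsilon> A ^^ k) p = (u k, u (k+1), u (k+2), u (k+3))" unfolding u_def by (subst orbit) (simp add: numeral_eq_Suc)
    have a0: "\<bar>u 0 - q0\<bar> < \<delta>" and a1: "\<bar>u 1 - q1\<bar> < \<delta>" and a2: "\<bar>u 2 - q2\<bar> < \<delta>" and a3: "\<bar>u 3 - q3\<bar> < \<delta>"
      using comp[OF pU] by (simp_all add: pe)
    have b0: "\<bar>u k - q0\<bar> < \<delta>" and b1: "\<bar>u (k+1) - q1\<bar> < \<delta>" and b2: "\<bar>u (k+2) - q2\<bar> < \<delta>" and b3: "\<bar>u (k+3) - q3\<bar> < \<delta>"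
      using comp[OF fpU] by (simp_all add: pk)
    define Mp where "Mp = Max ((\<lambda>n. \<bar>u n\<bar>) ` {..k+3})"
    have Mp_ge: "\<bar>u n\<bar> \<le> Mp" if "n \<le> k+3" for n
      unfolding Mp_def using that by (intro Max_ge) auto
    have "Mp \<in> (\<lambda>n. \<bar>u n\<bar>) ` {..k+3}" unfolding Mp_def by (intro Max_in) auto
    then obtain N where N3: "N \<le> k+3" and NM: "\<bar>u N\<bar> = Mp" by auto
    have c0: "\<bar>q0\<bar> - \<delta> \<le> Mp" using Mp_ge[of 0] abs_close[OF a0] by simp
    have c1: "\<bar>q1\<bar> - \<delta> \<le> Mp" using Mp_ge[of 1] abs_close[OF a1] by simp
    have c2: "\<bar>q2\<bar> - \<delta> \<le> Mp" using Mp_ge[of 2] abs_close[OF a2] by simp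
    have c3: "\<bar>q3\<bar> - \<delta> \<le> Mp" using Mp_ge[of 3] abs_close[OF a3] by simp
    have MpM: "M - \<delta> \<le> Mp" unfolding M_def using c0 c1 c2 c3 by (simp add: max_def)
    have "\<exists>j. 2 \<le> j \<and> j \<le> k+1 \<and> \<bar>u j - u N\<bar> < 4*\<delta>"
    proof (cases "N \<le> 1")
      case True
      show ?thesis
      proof (cases "k = 1 \<and> N = 0")
        case True
        hence b0': "\<bar>u 1 - q0\<bar> < \<delta>" and b1': "\<bar>u 2 - q1\<bar> < \<delta>" and N0: "N = 0" using b0 b1 by (auto simp: numeral_eq_Suc)
        have "\<bar>u 2 - u 0\<bar> < 4*\<delta>" by (rule abs_chain4[OF a0 b0' a1 b1'])
        thus ?thesis using N0 k1 by (intro exI[of _ 2]) auto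
      next
        case False
        hence j2: "2 \<le> N + k" using k1 \<open>N \<le> 1\<close> by auto
        have "\<bar>u (N+k) - u N\<bar> < 4*\<delta>"
        proof (cases "N = 0")
          case True thus ?thesis using abs_chain2[OF a0 b0] by simp
        next
          case False hence "N = 1" using \<open>N \<le> 1\<close> by auto
          thus ?thesis using abs_chain2[OF a1 b1] by (simp add: add.commute)
        qed
        thus ?thesis using j2 \<open>N \<le> 1\<close> by (intro exI[of _ "N+k"]) auto
      qed
    next
      case False
      show ?thesis
      proof (cases "N \<le> k+1")
        case True thus ?thesis using False d4 by (intro exI[of _ N]) auto
      next
        case F2: False
        show ?thesis
        proof (cases "k = 1 \<and> N = 4")
          case True
          hence b3': "\<bar>u 4 - q3\<bar> < \<delta>" and b2': "\<bar>u 3 - q2\<bar> < \<delta>" and N4: "N = 4" using b3 b2 by (auto simp: numeral_eq_Suc)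
          have "\<bar>u 4 - u 2\<bar> < 4*\<delta>" by (rule abs_chain4[OF a2 b2' a3 b3'])
          hence "\<bar>u 2 - u N\<bar> < 4*\<delta>" using N4 by (simp add: abs_minus_commute)
          thus ?thesis using True by (intro exI[of _ 2]) auto
        next
          case F3: False
          have Nc: "N = k+2 \<or> (N = k+3 \<and> k \<ge> 2)" using F2 F3 N3 k1 by auto
          show ?thesis
          proof (cases "N = k+2")
            case True
            hence "\<bar>u N - u 2\<bar> < 4*\<delta>" using abs_chain2[OF a2 b2] by simp
            hence "\<bar>u 2 - u N\<bar> < 4*\<delta>" by (simp add: abs_minus_commute)
            thus ?thesis using k1 by (intro exI[of _ 2]) auto
          next
            case False
            hence "N = k+3" "k \<ge> 2" using Nc by auto
            hence "\<bar>u N - u 3\<bar> < 4*\<delta>" using abs_chain2[OF a3 b3] by simp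
            hence "\<bar>u 3 - u N\<bar> < 4*\<delta>" by (simp add: abs_minus_commute)
            thus ?thesis using \<open>k \<ge> 2\<close> by (intro exI[of _ 3]) auto
          qed
        qed
      qed
    qed
    then obtain j where j2: "2 \<le> j" and jk: "j \<le> k+1" and jN: "\<bar>u j - u N\<bar> < 4*\<delta>" by blast
    obtain n where jn: "j = n + 2" using j2 by (metis add.commute le_Suc_ex)
    have rec: "A * (u n + u (n+4)) + u (n+1) + u (n+3) = 2 * u (n+2) - u (n+2) ^ 3 / \<epsilon>"
      unfolding u_def by (rule recur[OF assms(1,2)])
    have L0: "Mp - 4*\<delta> \<ge> M - 5*\<delta>" using MpM by linarith
    have Lpos: "Mp - 4*\<delta> > 0" using L0 d3 by linarith
    have "(M - 5*\<delta>)^2 \<le> (Mp - 4*\<delta>)^2" using L0 d3 by (intro power_mono) auto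
    hence "(M - 5*\<delta>)^2 / \<bar>\<epsilon>\<bar> \<le> (Mp - 4*\<delta>)^2 / \<bar>\<epsilon>\<bar>" by (simp add: divide_right_mono)
    hence Lc: "(Mp - 4*\<delta>)^2 / \<bar>\<epsilon>\<bar> - 2 \<ge> K + g" using d1 by linarith
    have cL: "\<bar>u (n+2)\<bar> \<ge> Mp - 4*\<delta>" using abs_close[OF jN] NM jn by simp
    have "K * Mp \<ge> (Mp - 4*\<delta>) * (K + g)"
      by (rule key[OF assms(1) rec Mp_ge Mp_ge Mp_ge Mp_ge cL Lpos Lc])
         (use jk jn K0 g0 K_def in auto)
    hence "Mp * g \<le> 4*\<delta>*(K+g)" by (simp add: algebra_simps)
    moreover have "(M - \<delta>) * g \<le> Mp * g" using MpM g0 by (intro mult_right_mono) auto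
    ultimately show False using d2 by linarith
  qed
qed

end
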